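(* Let $G$ be a cactus. Then the sparing number of $G$ is $r$, where $r$ is the number of odd cycles in $G$.
   Context: A cactus is a connected graph in which any two simple cycles have at most one vertex in common; equivalently, every block is a simple cycle or a single edge. Let $\mathbb{N}_0$ be the set of non-negative integers; for $A,B\subseteq\mathbb{N}_0$, $A+B=\{a+b:a\in A,b\in B\}$. An integer additive set-indexer (IASI) of a graph $G$ is an injective map $f:V(G)\to\mathcal{P}(\mathbb{N}_0)$ such that $f^+:E(G)\to\mathcal{P}(\mathbb{N}_0)$, $f^+(uv)=f(u)+f(v)$, is injective. A weak IASI is an IASI with $|f^+(uv)|=\max(|f(u)|,|f(v)|)$ for every edge $uv$. An edge $e$ is mono-indexed if $|f^+(e)|=1$. The sparing number $\varphi(G)$ is the minimum number of mono-indexed edges over all weak IASIs of $G$. *)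

theory Defs
  imports Main
begin

definition simple_graph :: "'a set \<Rightarrow> 'a set set \<Rightarrow> bool" where
  "simple_graph V E \<longleftrightarrow> finite V \<and>
     (\<forall>e\<in>E. \<exists>u v. e = {u, v} \<and> u \<noteq> v \<and> u \<in> V \<and> v \<in> V)"

definition connected_graph :: "'a set \<Rightarrow> 'a set set \<Rightarrow> bool" where
  "connected_graph V E \<longleftrightarrow> V \<noteq> {} \<and>
     (\<forall>u\<in>V. \<forall>v\<in>V. (u, v) \<in> {(x, y). {x, y} \<in> E}\<^sup>*)"

definition is_cycle :: "'a set \<Rightarrow> 'a set set \<Rightarrow> 'a list \<Rightarrow> bool" where
  "is_cycle V E xs \<longleftrightarrow> length xs \<ge> 3 \<and> distinct xs \<and> set xs \<subseteq> V \<and>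
     (\<forall>i < length xs. {xs ! i, xs ! ((i + 1) mod length xs)} \<in> E)"

definition cycle_edges :: "'a list \<Rightarrow> 'a set set" where
  "cycle_edges xs = {{xs ! i, xs ! ((i + 1) mod length xs)} | i. i < length xs}"

definition cycles :: "'a set \<Rightarrow> 'a set set \<Rightarrow> 'a set set set" where
  "cycles V E = cycle_edges ` {xs. is_cycle V E xs}"

definition odd_cycles :: "'a set \<Rightarrow> 'a set set \<Rightarrow> 'a set set set" where
  "odd_cycles V E = {C \<in> cycles V E. odd (card C)}"

definition cactus :: "'a set \<Rightarrow> 'a set set \<Rightarrow> bool" where
  "cactus V E \<longleftrightarrow> simple_graph V E \<and> connected_graph V E \<and>
     (\<forall>C1\<in>cycles V E. \<forall>C2\<in>cycles V E. C1 \<noteq> C2 \<longrightarrow> card (\<Union>C1 \<inter> \<Union>C2) \<le> 1)"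

definition sumset :: "nat set \<Rightarrow> nat set \<Rightarrow> nat set" where
  "sumset A B = {a + b | a b. a \<in> A \<and> b \<in> B}"

definition edge_set_index :: "('a \<Rightarrow> nat set) \<Rightarrow> 'a set \<Rightarrow> nat set" where
  "edge_set_index f e = (THE S. \<exists>u v. e = {u, v} \<and> S = sumset (f u) (f v))"

definition iasi :: "'a set \<Rightarrow> 'a set set \<Rightarrow> ('a \<Rightarrow> nat set) \<Rightarrow> bool" where
  "iasi V E f \<longleftrightarrow> (\<forall>v\<in>V. finite (f v) \<and> f v \<noteq> {}) \<and> inj_on f V \<and>
     inj_on (edge_set_index f) E"

definition weak_iasi :: "'a set \<Rightarrow> 'a set set \<Rightarrow> ('a \<Rightarrow> nat set) \<Rightarrow> bool" where
  "weak_iasi V E f \<longleftrightarrow> iasi V E f \<and>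
     (\<forall>u v. {u, v} \<in> E \<longrightarrow> card (sumset (f u) (f v)) = max (card (f u)) (card (f v)))"

definition mono_indexed_count :: "'a set set \<Rightarrow> ('a \<Rightarrow> nat set) \<Rightarrow> nat" where
  "mono_indexed_count E f = card {e \<in> E. card (edge_set_index f e) = 1}"

definition sparing_number :: "'a set \<Rightarrow> 'a set set \<Rightarrow> nat" where
  "sparing_number V E = (LEAST k. \<exists>f. weak_iasi V E f \<and> k = mono_indexed_count E f)"

end

theory Submission
  imports Defs
begin


definition ed :: "'a list \<Rightarrow> nat \<Rightarrow> 'a set" where
  "ed xs i = {xs ! i, xs ! ((i + 1) mod length xs)}"

lemma mod_succ: "j < n \<Longrightarrow> Suc j mod n = (if Suc j = n then 0 else Suc j)"
  by (cases "Suc j = n") auto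

lemma mod_succ_lt: "0 < n \<Longrightarrow> Suc j mod n < n"
  by simp

lemma cycle_edges_ed: "cycle_edges xs = ed xs ` {..<length xs}"
  unfolding cycle_edges_def ed_def by auto

lemma is_cycle_len: "is_cycle V E xs \<Longrightarrow> length xs \<ge> 3"
  by (simp add: is_cycle_def)

lemma ed_inj:
  assumes c: "is_cycle V E xs" and i: "i < length xs" and j: "j < length xs"
    and eq: "ed xs i = ed xs j"
  shows "i = j"
proof (rule ccontr)
  assume ne: "i \<noteq> j"
  let ?n = "length xs"
  have d: "distinct xs" and n3: "?n \<ge> 3" using c by (auto simp: is_cycle_def)
  have i1: "(i+1) mod ?n < ?n" and j1: "(j+1) mod ?n < ?n" using n3 by (auto intro: mod_less_divisor)
  have "xs ! i \<noteq> xs ! j" using d i j ne by (simp add: nth_eq_iff_index_eq)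
  with eq have "xs ! i = xs ! ((j+1) mod ?n) \<and> xs ! ((i+1) mod ?n) = xs ! j"
    unfolding ed_def by (auto simp: doubleton_eq_iff)
  hence a: "i = (j+1) mod ?n" and b: "(i+1) mod ?n = j"
    using d i j i1 j1 by (auto simp: nth_eq_iff_index_eq)
  show False
  proof (cases "Suc j = ?n")
    case True
    hence "i = 0" using a by simp
    hence "j = 1" using b n3 by simp
    thus False using True n3 by simp
  next
    case False
    hence "i = Suc j" using a mod_succ[OF j] by simp
    moreover have "Suc i mod ?n = (if Suc i = ?n then 0 else Suc i)" using mod_succ[OF i] .
    ultimately show False using b n3 i by (simp split: if_splits)
  qed
qed

lemma card_cycle_edges:
  assumes "is_cycle V E xs" shows "card (cycle_edges xs) = length xs"
proof -
  have "inj_on (ed xs) {..<length xs}" using ed_inj[OF assms] by (auto simp: inj_on_def)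
  thus ?thesis by (simp add: cycle_edges_ed card_image)
qed

lemma ed_in_E: "is_cycle V E xs \<Longrightarrow> i < length xs \<Longrightarrow> ed xs i \<in> E"
  by (simp add: is_cycle_def ed_def)

lemma cycle_edges_sub: "is_cycle V E xs \<Longrightarrow> cycle_edges xs \<subseteq> E"
  by (auto simp: cycle_edges_ed ed_in_E)

lemma Union_cycle_edges: "is_cycle V E xs \<Longrightarrow> \<Union>(cycle_edges xs) = set xs"
proof -
  assume c: "is_cycle V E xs"
  hence n3: "length xs \<ge> 3" by (simp add: is_cycle_def)
  show ?thesis
  proof
    have "0 < length xs" using n3 by linarith
    hence "\<And>i. Suc i mod length xs < length xs" by simp
    thus "\<Union>(cycle_edges xs) \<subseteq> set xs"
      by (auto simp: cycle_edges_ed ed_def intro!: nth_mem)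
    show "set xs \<subseteq> \<Union>(cycle_edges xs)"
    proof
      fix x assume "x \<in> set xs"
      then obtain i where "i < length xs" "x = xs ! i" by (auto simp: in_set_conv_nth)
      thus "x \<in> \<Union>(cycle_edges xs)" using n3 by (force simp: cycle_edges_ed ed_def)
    qed
  qed
qed

lemma is_cycle_del:
  "is_cycle V (E - {e}) xs \<longleftrightarrow> is_cycle V E xs \<and> e \<notin> cycle_edges xs"
  by (auto simp: is_cycle_def cycle_edges_def)

lemma cycles_del: "cycles V (E - {e}) = {C \<in> cycles V E. e \<notin> C}"
  unfolding cycles_def by (auto simp: is_cycle_del)

lemma odd_cycles_del: "odd_cycles V (E - {e}) = {C \<in> odd_cycles V E. e \<notin> C}"
  unfolding odd_cycles_def by (auto simp: cycles_del)

lemma cycles_sub: "C \<in> cycles V E \<Longrightarrow> C \<subseteq> E"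
  unfolding cycles_def using cycle_edges_sub by blast

definition cactuslike :: "'a set \<Rightarrow> 'a set set \<Rightarrow> bool" where
  "cactuslike V E \<longleftrightarrow> simple_graph V E \<and>
     (\<forall>C1\<in>cycles V E. \<forall>C2\<in>cycles V E. C1 \<noteq> C2 \<longrightarrow> card (\<Union>C1 \<inter> \<Union>C2) \<le> 1)"

lemma cactuslike_del: "cactuslike V E \<Longrightarrow> cactuslike V (E - {e})"
  unfolding cactuslike_def simple_graph_def cycles_del by auto

lemma simple_edge: "simple_graph V E \<Longrightarrow> e \<in> E \<Longrightarrow> \<exists>u v. e = {u,v} \<and> u \<noteq> v \<and> u \<in> V \<and> v \<in> V"
  by (simp add: simple_graph_def)

lemma simple_V: "simple_graph V E \<Longrightarrow> {x,y} \<in> E \<Longrightarrow> x \<in> V"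
  unfolding simple_graph_def by (metis doubleton_eq_iff)

lemma simple_finite_E: "simple_graph V E \<Longrightarrow> finite E"
proof -
  assume s: "simple_graph V E"
  hence "E \<subseteq> Pow V" by (force simp: simple_graph_def)
  moreover have "finite V" using s by (simp add: simple_graph_def)
  ultimately show ?thesis by (meson finite_Pow_iff finite_subset)
qed

lemma cycles_finite: "simple_graph V E \<Longrightarrow> finite (cycles V E)"
proof -
  assume s: "simple_graph V E"
  have "cycles V E \<subseteq> Pow E" using cycles_sub by (metis PowI subsetI)
  thus ?thesis using simple_finite_E[OF s] by (meson finite_Pow_iff finite_subset)
qed

lemma shared_edge:
  assumes cl: "cactuslike V E" and c1: "C1 \<in> cycles V E" and c2: "C2 \<in> cycles V E"
    and e1: "e \<in> C1" and e2: "e \<in> C2"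
  shows "C1 = C2"
proof (rule ccontr)
  assume ne: "C1 \<noteq> C2"
  obtain xs where xs: "is_cycle V E xs" "C1 = cycle_edges xs" using c1 by (auto simp: cycles_def)
  have "e \<in> E" using e1 c1 cycles_sub by blast
  then obtain u v where uv: "e = {u,v}" "u \<noteq> v" using cl by (auto simp: cactuslike_def simple_graph_def)
  have "{u,v} \<subseteq> \<Union>C1 \<inter> \<Union>C2" using e1 e2 uv by auto
  moreover have "finite (\<Union>C1 \<inter> \<Union>C2)" using xs Union_cycle_edges[OF xs(1)] by auto
  ultimately have "card {u,v} \<le> card (\<Union>C1 \<inter> \<Union>C2)" by (rule card_mono[rotated])
  moreover have "card (\<Union>C1 \<inter> \<Union>C2) \<le> 1" using cl c1 c2 ne by (auto simp: cactuslike_def)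
  ultimately show False using uv by simp
qed



lemma parity_aux:
  fixes g :: "nat \<Rightarrow> bool"
  shows "even (card {i. i < m \<and> g i \<noteq> g (Suc i)}) \<longleftrightarrow> (g 0 = g m)"
proof (induction m)
  case 0 then show ?case by simp
next
  case (Suc m)
  let ?S = "{i. i < m \<and> g i \<noteq> g (Suc i)}"
  have eq: "{i. i < Suc m \<and> g i \<noteq> g (Suc i)} = (if g m \<noteq> g (Suc m) then insert m ?S else ?S)"
    by (auto simp: less_Suc_eq)
  have fin: "finite ?S" by simp
  have nm: "m \<notin> ?S" by simp
  show ?case
  proof (cases "g m \<noteq> g (Suc m)")
    case True
    hence "card {i. i < Suc m \<and> g i \<noteq> g (Suc i)} = Suc (card ?S)"
      using eq fin nm by simp
    thus ?thesis using Suc True by auto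
  next
    case False
    thus ?thesis using Suc eq by auto
  qed
qed

lemma cyc_parity:
  fixes g :: "nat \<Rightarrow> bool"
  assumes "0 < n"
  shows "even (card {i. i < n \<and> g i \<noteq> g (Suc i mod n)})"
proof -
  obtain m where n: "n = Suc m" using assms by (cases n) auto
  let ?S = "{i. i < m \<and> g i \<noteq> g (Suc i)}"
  have eq: "{i. i < n \<and> g i \<noteq> g (Suc i mod n)} = (if g m \<noteq> g 0 then insert m ?S else ?S)"
    unfolding n by (auto simp: less_Suc_eq mod_succ)
  have fin: "finite ?S" by simp
  have nm: "m \<notin> ?S" by simp
  show ?thesis
  proof (cases "g m \<noteq> g 0")
    case True
    hence "card {i. i < n \<and> g i \<noteq> g (Suc i mod n)} = Suc (card ?S)"
      using eq fin nm by simp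
    thus ?thesis using parity_aux[of m g] True by auto
  next
    case False
    thus ?thesis using parity_aux[of m g] eq by auto
  qed
qed

lemma cyc_one:
  fixes g :: "nat \<Rightarrow> bool"
  assumes n: "0 < n" and k: "k < n"
    and all: "\<forall>i<n. i \<noteq> k \<longrightarrow> g i \<noteq> g (Suc i mod n)"
  shows "g k \<noteq> g (Suc k mod n) \<longleftrightarrow> even n"
proof -
  have p: "even (card {i. i < n \<and> g i \<noteq> g (Suc i mod n)})" using cyc_parity[OF n] .
  show ?thesis
  proof (cases "g k \<noteq> g (Suc k mod n)")
    case True
    hence "{i. i < n \<and> g i \<noteq> g (Suc i mod n)} = {..<n}" using all by auto
    thus ?thesis using p True by simp
  next
    case False
    hence "{i. i < n \<and> g i \<noteq> g (Suc i mod n)} = {..<n} - {k}" using all by auto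
    hence "card {i. i < n \<and> g i \<noteq> g (Suc i mod n)} = n - 1" using k by simp
    thus ?thesis using p False n by (cases n) auto
  qed
qed

lemma rtrancl_path:
  assumes "(a, z) \<in> R\<^sup>*"
  shows "\<exists>p. p \<noteq> [] \<and> hd p = a \<and> last p = z \<and> distinct p \<and>
           (\<forall>i. Suc i < length p \<longrightarrow> (p ! i, p ! Suc i) \<in> R)"
  using assms
proof (induction rule: rtrancl_induct)
  case base
  show ?case by (rule exI[of _ "[a]"]) simp
next
  case (step y z)
  then obtain p where p: "p \<noteq> []" "hd p = a" "last p = y" "distinct p"
    "\<forall>i. Suc i < length p \<longrightarrow> (p ! i, p ! Suc i) \<in> R" by blast
  show ?case
  proof (cases "z \<in> set p")
    case True
    then obtain as bs where pe: "p = as @ z # bs" by (metis split_list)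
    let ?q = "as @ [z]"
    have "hd ?q = a" using p(2) pe by (cases as) auto
    moreover have "distinct ?q" using p(4) pe by simp
    moreover have "\<forall>i. Suc i < length ?q \<longrightarrow> (?q ! i, ?q ! Suc i) \<in> R"
    proof (intro allI impI)
      fix i assume i: "Suc i < length ?q"
      have "?q ! i = p ! i" using i pe by (simp add: nth_append)
      moreover have "?q ! Suc i = p ! Suc i" using i pe
        by (cases "Suc i < length as") (auto simp: nth_append)
      moreover have "Suc i < length p" using i pe by simp
      ultimately show "(?q ! i, ?q ! Suc i) \<in> R" using p(5) by simp
    qed
    ultimately show ?thesis by (intro exI[of _ ?q]) simp
  next
    case False
    let ?q = "p @ [z]"
    have "hd ?q = a" using p by simp
    moreover have "distinct ?q" using p(4) False by simp
    moreover have "\<forall>i. Suc i < length ?q \<longrightarrow> (?q ! i, ?q ! Suc i) \<in> R"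
    proof (intro allI impI)
      fix i assume i: "Suc i < length ?q"
      show "(?q ! i, ?q ! Suc i) \<in> R"
      proof (cases "Suc i < length p")
        case True
        thus ?thesis using p(5) by (simp add: nth_append)
      next
        case False
        hence si: "Suc i = length p" using i by simp
        hence ii: "i = length p - 1" by simp
        hence "?q ! i = y" using p(1,3) by (simp add: nth_append last_conv_nth)
        moreover have "?q ! Suc i = z" using si by (simp add: nth_append)
        ultimately show ?thesis using step(2) by simp
      qed
    qed
    ultimately show ?thesis by (intro exI[of _ ?q]) simp
  qed
qed

lemma bridge:
  assumes s: "simple_graph V E" and e0: "e0 = {r, v}" "e0 \<in> E" and rv: "r \<noteq> v"
    and reach: "(v, r) \<in> {(x, y). {x, y} \<in> E - {e0}}\<^sup>*"
  shows "\<exists>C\<in>cycles V E. e0 \<in> C"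
proof -
  obtain p where p: "p \<noteq> []" "hd p = v" "last p = r" "distinct p"
    "\<forall>i. Suc i < length p \<longrightarrow> {p ! i, p ! Suc i} \<in> E - {e0}"
    using rtrancl_path[OF reach] by auto
  let ?n = "length p"
  have p0: "p ! 0 = v" using p(1,2) by (simp add: hd_conv_nth)
  have pl: "p ! (?n - 1) = r" using p(1,3) by (simp add: last_conv_nth)
  have n2: "?n \<ge> 2"
  proof (rule ccontr)
    assume "\<not> ?n \<ge> 2"
    moreover have "?n \<noteq> 0" using p(1) by simp
    ultimately have "?n = 1" by linarith
    thus False using p0 pl rv by simp
  qed
  have n3: "?n \<ge> 3"
  proof (rule ccontr)
    assume "\<not> ?n \<ge> 3"
    hence n: "?n = 2" using n2 by simp
    hence "{p ! 0, p ! 1} \<in> E - {e0}" using p(5) by auto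
    moreover have "p ! 1 = r" using pl n by simp
    ultimately show False using p0 e0 by (auto simp: insert_commute)
  qed
  have rV: "r \<in> V" using simple_V[OF s] e0 by blast
  have setV: "set p \<subseteq> V"
  proof
    fix x assume "x \<in> set p"
    then obtain i where i: "i < ?n" "x = p ! i" by (auto simp: in_set_conv_nth)
    show "x \<in> V"
    proof (cases "Suc i < ?n")
      case True
      thus ?thesis using p(5) i simple_V[OF s] by blast
    next
      case False
      hence "i = ?n - 1" using i by simp
      thus ?thesis using pl rV i by simp
    qed
  qed
  have edges: "\<forall>i < ?n. {p ! i, p ! ((i + 1) mod ?n)} \<in> E"
  proof (intro allI impI)
    fix i assume i: "i < ?n"
    show "{p ! i, p ! ((i + 1) mod ?n)} \<in> E"
    proof (cases "Suc i < ?n")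
      case True
      thus ?thesis using p(5) by simp
    next
      case False
      hence "i = ?n - 1" "Suc i = ?n" using i by auto
      thus ?thesis using pl p0 e0 by (simp add: insert_commute)
    qed
  qed
  have cyc: "is_cycle V E p" using n3 p(4) setV edges by (simp add: is_cycle_def)
  have "e0 \<in> cycle_edges p"
  proof -
    have "Suc (?n - 1) = ?n" using n3 by simp
    hence "{p ! (?n - 1), p ! ((?n - 1 + 1) mod ?n)} = e0" using pl p0 e0 by (simp add: insert_commute)
    moreover have "?n - 1 < ?n" using n3 by simp
    ultimately show ?thesis unfolding cycle_edges_def by blast
  qed
  thus ?thesis using cyc unfolding cycles_def by blast
qed



definition allF :: "('a \<Rightarrow> bool) \<Rightarrow> 'a set \<Rightarrow> bool" where
  "allF c e \<longleftrightarrow> (\<forall>x\<in>e. \<not> c x)"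

definition good :: "'a set \<Rightarrow> 'a set set \<Rightarrow> ('a \<Rightarrow> bool) \<Rightarrow> bool" where
  "good V E c \<longleftrightarrow> (\<forall>e\<in>E. \<not> (\<forall>x\<in>e. c x)) \<and>
     (\<forall>e\<in>E. allF c e \<longrightarrow> (\<exists>C\<in>odd_cycles V E. e \<in> C)) \<and>
     (\<forall>C\<in>odd_cycles V E. \<forall>e1\<in>C. \<forall>e2\<in>C. allF c e1 \<longrightarrow> allF c e2 \<longrightarrow> e1 = e2)"

lemma odd_sub: "C \<in> odd_cycles V E \<Longrightarrow> C \<subseteq> E"
  unfolding odd_cycles_def using cycles_sub by blast

lemma good_cong:
  assumes "good V E c" "\<forall>e\<in>E. \<forall>x\<in>e. c x = d x"
  shows "good V E d"
proof -
  have "\<forall>e\<in>E. allF c e = allF d e" using assms(2) by (auto simp: allF_def)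
  moreover have "\<forall>e\<in>E. (\<forall>x\<in>e. c x) = (\<forall>x\<in>e. d x)" using assms(2) by auto
  ultimately show ?thesis using assms(1) odd_sub unfolding good_def by (smt (verit) subsetD)
qed

lemma bichrom:
  assumes cl: "cactuslike V E" and C0: "C0 \<in> cycles V E" and e': "e' \<in> C0"
    and g: "good V (E - {e'}) c" and f: "f \<in> C0" "f \<noteq> e'" "f = {x, y}"
  shows "c x \<noteq> c y"
proof
  assume eq: "c x = c y"
  have fE: "f \<in> E - {e'}" using f C0 cycles_sub by blast
  show False
  proof (cases "c x")
    case True
    thus False using g fE eq f(3) unfolding good_def by auto
  next
    case False
    hence "allF c f" using eq f(3) by (auto simp: allF_def)
    then obtain D where D: "D \<in> odd_cycles V (E - {e'})" "f \<in> D" using g fE unfolding good_def by blast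
    hence "D \<in> cycles V E" "e' \<notin> D" by (auto simp: odd_cycles_def cycles_del)
    moreover have "D = C0" using shared_edge[OF cl _ C0 D(2) f(1)] calculation by blast
    ultimately show False using e' by simp
  qed
qed

lemma arith1: "j < n \<Longrightarrow> 3 \<le> n \<Longrightarrow> Suc j mod n \<noteq> (j + n - 1) mod n"
proof (cases "j = 0")
  case True
  assume "3 \<le> n"
  thus ?thesis using True by simp
next
  case False
  assume jn: "j < n" "3 \<le> n"
  have "(j + n - 1) mod n = (j - 1 + n) mod n" using False by (simp add: algebra_simps)
  also have "\<dots> = j - 1" using jn by simp
  finally show ?thesis using jn False mod_succ[OF jn(1)] by (simp split: if_splits; arith)
qed

lemma arith2: "j < n \<Longrightarrow> Suc ((j + n - 1) mod n) mod n = j"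
proof (cases "j = 0")
  case True
  assume "j < n"
  thus ?thesis using True by simp
next
  case False
  assume jn: "j < n"
  have "(j + n - 1) mod n = (j - 1 + n) mod n" using False by (simp add: algebra_simps)
  also have "\<dots> = j - 1" using jn by simp
  finally show ?thesis using jn False by simp
qed



lemma good_D1: "good V E c \<Longrightarrow> e \<in> E \<Longrightarrow> \<exists>x\<in>e. \<not> c x"
  unfolding good_def by blast
lemma good_D2: "good V E c \<Longrightarrow> e \<in> E \<Longrightarrow> allF c e \<Longrightarrow> \<exists>C\<in>odd_cycles V E. e \<in> C"
  unfolding good_def by blast
lemma good_D3: "good V E c \<Longrightarrow> C \<in> odd_cycles V E \<Longrightarrow> e1 \<in> C \<Longrightarrow> e2 \<in> C \<Longrightarrow> allF c e1 \<Longrightarrow> allF c e2 \<Longrightarrow> e1 = e2"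
  unfolding good_def by blast

lemma bridge_case:
  assumes cl: "cactuslike V E" and e0: "e0 = {r, v}" "e0 \<in> E" and rv: "r \<noteq> v"
    and nc: "\<not> (\<exists>C\<in>cycles V E. e0 \<in> C)"
    and g1: "good V (E - {e0}) c1" "c1 r = b"
    and g2: "good V (E - {e0}) c2" "c2 v = (\<not> b)"
  shows "\<exists>c. good V E c \<and> c r = b"
proof -
  let ?E' = "E - {e0}"
  let ?R = "{(x, y). {x, y} \<in> ?E'}"
  define K where "K = {x. (v, x) \<in> ?R\<^sup>*}"
  have s: "simple_graph V E" using cl by (simp add: cactuslike_def)
  have Kcl: "\<And>x y. {x, y} \<in> ?E' \<Longrightarrow> x \<in> K \<longleftrightarrow> y \<in> K"
  proof -
    fix x y assume xy: "{x, y} \<in> ?E'"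
    hence xyR: "(x, y) \<in> ?R" and yxR: "(y, x) \<in> ?R" by (auto simp: insert_commute)
    show "x \<in> K \<longleftrightarrow> y \<in> K"
    proof
      assume "x \<in> K" hence "(v, x) \<in> ?R\<^sup>*" by (simp only: K_def mem_Collect_eq)
      hence "(v, y) \<in> ?R\<^sup>*" using xyR by (rule rtrancl_into_rtrancl)
      thus "y \<in> K" by (simp only: K_def mem_Collect_eq)
    next
      assume "y \<in> K" hence "(v, y) \<in> ?R\<^sup>*" by (simp only: K_def mem_Collect_eq)
      hence "(v, x) \<in> ?R\<^sup>*" using yxR by (rule rtrancl_into_rtrancl)
      thus "x \<in> K" by (simp only: K_def mem_Collect_eq)
    qed
  qed
  have vK: "v \<in> K" unfolding K_def by simp
  have rK: "r \<notin> K"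
  proof
    assume "r \<in> K" hence "(v, r) \<in> ?R\<^sup>*" by (simp only: K_def mem_Collect_eq)
    from bridge[OF s e0 rv this] nc show False by blast
  qed
  define c where "c = (\<lambda>x. if x \<in> K then c2 x else c1 x)"
  have cyc_eq: "cycles V ?E' = cycles V E" using nc by (auto simp: cycles_del)
  hence odd_eq: "odd_cycles V ?E' = odd_cycles V E" by (simp add: odd_cycles_def)
  have edge_agree: "\<And>e. e \<in> ?E' \<Longrightarrow> (\<forall>z\<in>e. c z = c2 z) \<or> (\<forall>z\<in>e. c z = c1 z)"
  proof -
    fix e assume e: "e \<in> ?E'"
    then obtain x y where xy: "e = {x, y}" using simple_edge[OF s, of e] by blast
    show "(\<forall>z\<in>e. c z = c2 z) \<or> (\<forall>z\<in>e. c z = c1 z)"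
      using Kcl[of x y] e xy by (auto simp: c_def)
  qed
  have cyc_agree: "\<And>C. C \<in> cycles V ?E' \<Longrightarrow>
      (\<forall>e\<in>C. \<forall>z\<in>e. c z = c2 z) \<or> (\<forall>e\<in>C. \<forall>z\<in>e. c z = c1 z)"
  proof -
    fix C assume "C \<in> cycles V ?E'"
    then obtain ys where ys: "is_cycle V ?E' ys" "C = cycle_edges ys" by (auto simp: cycles_def)
    have all: "\<forall>i < length ys. ys ! i \<in> K \<longleftrightarrow> ys ! 0 \<in> K"
    proof (intro allI impI)
      fix i assume "i < length ys"
      thus "ys ! i \<in> K \<longleftrightarrow> ys ! 0 \<in> K"
      proof (induction i)
        case 0 then show ?case by simp
      next
        case (Suc i)
        have "\<forall>j<length ys. {ys ! j, ys ! ((j + 1) mod length ys)} \<in> ?E'"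
          using ys(1) unfolding is_cycle_def by blast
        hence "{ys ! i, ys ! ((i + 1) mod length ys)} \<in> ?E'" using Suc_lessD[OF Suc(2)] by blast
        hence "{ys ! i, ys ! Suc i} \<in> ?E'" using Suc(2) by simp
        hence "ys ! Suc i \<in> K \<longleftrightarrow> ys ! i \<in> K" using Kcl by blast
        moreover have "ys ! i \<in> K \<longleftrightarrow> ys ! 0 \<in> K" using Suc.IH Suc.prems by simp
        ultimately show ?case by blast
      qed
    qed
    have U: "\<Union>C = set ys" using Union_cycle_edges[OF ys(1)] ys(2) by simp
    show "(\<forall>e\<in>C. \<forall>z\<in>e. c z = c2 z) \<or> (\<forall>e\<in>C. \<forall>z\<in>e. c z = c1 z)"
    proof (cases "ys ! 0 \<in> K")
      case True
      hence "set ys \<subseteq> K" using all by (auto simp: in_set_conv_nth)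
      thus ?thesis using U by (auto simp: c_def)
    next
      case False
      hence "set ys \<inter> K = {}" using all by (auto simp: in_set_conv_nth)
      thus ?thesis using U by (auto simp: c_def)
    qed
  qed
  have cr: "c r = b" using rK g1(2) by (simp add: c_def)
  have cv: "c v = (\<not> b)" using vK g2(2) by (simp add: c_def)
  have P1: "\<forall>e\<in>E. \<not> (\<forall>x\<in>e. c x)"
  proof
    fix e assume e: "e \<in> E"
    show "\<not> (\<forall>x\<in>e. c x)"
    proof (cases "e = e0")
      case True thus ?thesis using cr cv e0 by auto
    next
      case False
      hence e': "e \<in> ?E'" using e by simp
      from edge_agree[OF e'] show ?thesis
      proof
        assume "\<forall>z\<in>e. c z = c2 z" thus ?thesis using good_D1[OF g2(1) e'] by auto
      next
        assume "\<forall>z\<in>e. c z = c1 z" thus ?thesis using good_D1[OF g1(1) e'] by auto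
      qed
    qed
  qed
  have P2: "\<forall>e\<in>E. allF c e \<longrightarrow> (\<exists>C\<in>odd_cycles V E. e \<in> C)"
  proof (intro ballI impI)
    fix e assume e: "e \<in> E" and a: "allF c e"
    have "e \<noteq> e0" using a cr cv e0 by (auto simp: allF_def)
    hence e': "e \<in> ?E'" using e by simp
    have "allF c2 e \<or> allF c1 e" using edge_agree[OF e'] a by (auto simp: allF_def)
    thus "\<exists>C\<in>odd_cycles V E. e \<in> C" using good_D2[OF g1(1) e'] good_D2[OF g2(1) e'] odd_eq by auto
  qed
  have P3: "\<forall>C\<in>odd_cycles V E. \<forall>e1\<in>C. \<forall>e2\<in>C. allF c e1 \<longrightarrow> allF c e2 \<longrightarrow> e1 = e2"
  proof (intro ballI impI)
    fix C e1 e2 assume C: "C \<in> odd_cycles V E" and e: "e1 \<in> C" "e2 \<in> C" and a: "allF c e1" "allF c e2"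
    have C': "C \<in> cycles V ?E'" "C \<in> odd_cycles V ?E'" using C odd_eq cyc_eq by (auto simp: odd_cycles_def)
    from cyc_agree[OF C'(1)] show "e1 = e2"
    proof
      assume "\<forall>e\<in>C. \<forall>z\<in>e. c z = c2 z"
      hence "allF c2 e1" "allF c2 e2" using a e by (auto simp: allF_def)
      thus ?thesis using good_D3[OF g2(1) C'(2) e] by blast
    next
      assume "\<forall>e\<in>C. \<forall>z\<in>e. c z = c1 z"
      hence "allF c1 e1" "allF c1 e2" using a e by (auto simp: allF_def)
      thus ?thesis using good_D3[OF g1(1) C'(2) e] by blast
    qed
  qed
  have "good V E c" unfolding good_def using P1 P2 P3 by blast
  thus ?thesis using cr by blast
qed



lemma cycle_case:
  assumes cl: "cactuslike V E" and e0: "e0 = {r, v}" "e0 \<in> E" and rv: "r \<noteq> v"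
    and xs: "is_cycle V E xs" and e0C: "e0 \<in> cycle_edges xs"
    and IH: "\<forall>e'\<in>E. \<exists>c. good V (E - {e'}) c \<and> c r = b"
  shows "\<exists>c. good V E c \<and> c r = b"
proof -
  define C0 where "C0 = cycle_edges xs"
  define n where "n = length xs"
  have s: "simple_graph V E" using cl by (simp add: cactuslike_def)
  have C0c: "C0 \<in> cycles V E" using xs by (auto simp: cycles_def C0_def)
  have n3: "n \<ge> 3" using xs by (simp add: is_cycle_def n_def)
  have dist: "distinct xs" using xs by (simp add: is_cycle_def)
  have C0E: "C0 \<subseteq> E" using cycle_edges_sub[OF xs] by (simp add: C0_def)
  have edn: "\<And>i. ed xs i = {xs ! i, xs ! (Suc i mod n)}" by (simp add: ed_def n_def)
  have C0ed: "C0 = ed xs ` {..<n}" by (simp add: C0_def n_def cycle_edges_ed)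
  obtain e' z where e'C: "e' \<in> C0" "z \<in> e'" and bT: "b \<longrightarrow> r \<notin> e' \<and> z = v"
      and bF: "\<not> b \<longrightarrow> e' = e0 \<and> z = r"
  proof (cases b)
    case False
    thus ?thesis using that[of e0 r] e0C e0 by (simp add: C0_def)
  next
    case True
    have "v \<in> \<Union>C0" using e0C e0 by (auto simp: C0_def)
    hence "v \<in> set xs" using Union_cycle_edges[OF xs] by (simp add: C0_def)
    then obtain j where j: "j < n" "v = xs ! j" by (auto simp: in_set_conv_nth n_def)
    let ?p = "(j + n - 1) mod n"
    have pn: "?p < n" using n3 by simp
    have A: "ed xs j \<in> C0" "v \<in> ed xs j" using j by (auto simp: C0ed edn)
    have B: "ed xs ?p \<in> C0" "v \<in> ed xs ?p" using j pn arith2[OF j(1)] by (auto simp: C0ed edn)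
    show ?thesis
    proof (cases "r \<in> ed xs j")
      case False
      thus ?thesis using that[of "ed xs j" v] A True by simp
    next
      case rA: True
      show ?thesis
      proof (cases "r \<in> ed xs ?p")
        case False
        thus ?thesis using that[of "ed xs ?p" v] B True by simp
      next
        case rB: True
        have sj: "Suc j mod n < n" using n3 by simp
        have r1: "r = xs ! (Suc j mod n)" using rA rv j by (auto simp: edn)
        have r2: "r = xs ! ?p" using rB rv j arith2[OF j(1)] by (auto simp: edn)
        have "Suc j mod n = ?p" using r1 r2 dist sj pn by (simp add: n_def nth_eq_iff_index_eq)
        thus ?thesis using arith1[OF j(1) n3] by simp
      qed
    qed
  qed
  have e'E: "e' \<in> E" using e'C C0E by blast
  obtain c where g: "good V (E - {e'}) c" and cr: "c r = b" using IH e'E by blast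
  have bich: "\<And>f x y. f \<in> C0 \<Longrightarrow> f \<noteq> e' \<Longrightarrow> f = {x, y} \<Longrightarrow> c x \<noteq> c y"
    using bichrom[OF cl C0c e'C(1) g] by blast
  have cz: "\<not> c z"
  proof (cases b)
    case False thus ?thesis using bF cr by simp
  next
    case True
    have "e0 \<noteq> e'" using bT True e0 by auto
    hence "c r \<noteq> c v" using bich[of e0 r v] e0C e0 by (simp add: C0_def)
    thus ?thesis using True bT cr by simp
  qed
  obtain k where k: "k < n" "e' = ed xs k" using e'C C0ed by auto
  have allbi: "\<forall>i<n. i \<noteq> k \<longrightarrow> c (xs ! i) \<noteq> c (xs ! (Suc i mod n))"
  proof (intro allI impI)
    fix i assume i: "i < n" "i \<noteq> k"
    have "ed xs i \<noteq> e'" using ed_inj[OF xs, of i k] i k by (auto simp: n_def)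
    moreover have "ed xs i \<in> C0" using i C0ed by auto
    ultimately show "c (xs ! i) \<noteq> c (xs ! (Suc i mod n))" using bich edn by blast
  qed
  have par: "c (xs ! k) \<noteq> c (xs ! (Suc k mod n)) \<longleftrightarrow> even n"
    using cyc_one[of n k "\<lambda>i. c (xs ! i)"] n3 k allbi by simp
  have cardC0: "card C0 = n" using card_cycle_edges[OF xs] by (simp add: C0_def n_def)
  have FFodd: "allF c e' \<Longrightarrow> odd n"
  proof -
    assume "allF c e'"
    hence "c (xs ! k) = c (xs ! (Suc k mod n))" using k edn by (auto simp: allF_def)
    thus "odd n" using par by simp
  qed
  have other: "\<And>f. f \<in> C0 \<Longrightarrow> f \<noteq> e' \<Longrightarrow> \<not> allF c f"
  proof
    fix f assume f: "f \<in> C0" "f \<noteq> e'" "allF c f"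
    obtain x y where xy: "f = {x, y}" using simple_edge[OF s] f(1) C0E by blast
    have "c x \<noteq> c y" using bich f xy by blast
    thus False using f(3) xy by (auto simp: allF_def)
  qed
  have P1: "\<forall>e\<in>E. \<not> (\<forall>x\<in>e. c x)"
  proof
    fix e assume e: "e \<in> E"
    show "\<not> (\<forall>x\<in>e. c x)"
    proof (cases "e = e'")
      case True thus ?thesis using e'C cz by blast
    next
      case False thus ?thesis using good_D1[OF g] e by blast
    qed
  qed
  have P2: "\<forall>e\<in>E. allF c e \<longrightarrow> (\<exists>C\<in>odd_cycles V E. e \<in> C)"
  proof (intro ballI impI)
    fix e assume e: "e \<in> E" and a: "allF c e"
    show "\<exists>C\<in>odd_cycles V E. e \<in> C"
    proof (cases "e = e'")
      case True
      hence "C0 \<in> odd_cycles V E" using FFodd a C0c cardC0 by (simp add: odd_cycles_def)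
      thus ?thesis using True e'C by blast
    next
      case False
      then obtain D where "D \<in> odd_cycles V (E - {e'})" "e \<in> D" using good_D2[OF g, of e] e a by blast
      thus ?thesis by (auto simp: odd_cycles_del)
    qed
  qed
  have P3: "\<forall>D\<in>odd_cycles V E. \<forall>e1\<in>D. \<forall>e2\<in>D. allF c e1 \<longrightarrow> allF c e2 \<longrightarrow> e1 = e2"
  proof (intro ballI impI)
    fix D e1 e2 assume D: "D \<in> odd_cycles V E" and e: "e1 \<in> D" "e2 \<in> D" and a: "allF c e1" "allF c e2"
    show "e1 = e2"
    proof (cases "e' \<in> D")
      case True
      have "D \<in> cycles V E" using D by (simp add: odd_cycles_def)
      hence "D = C0" using shared_edge[OF cl _ C0c True e'C(1)] by blast
      thus ?thesis using other e a by blast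
    next
      case False
      hence "D \<in> odd_cycles V (E - {e'})" using D by (simp add: odd_cycles_del)
      thus ?thesis using good_D3[OF g _ e a] by blast
    qed
  qed
  have "good V E c" unfolding good_def by (intro conjI P1 P2 P3)
  thus ?thesis using cr by blast
qed

lemma odd_cycles_empty: "odd_cycles V {} = {}"
proof -
  have "\<And>C. C \<in> odd_cycles V {} \<Longrightarrow> False"
  proof -
    fix C assume C: "C \<in> odd_cycles V {}"
    hence "C = {}" using odd_sub by blast
    thus False using C by (simp add: odd_cycles_def)
  qed
  thus ?thesis by blast
qed

lemma main_col:
  assumes "cactuslike V E"
  shows "\<exists>c. good V E c \<and> c r = b"
  using assms
proof (induction "card E" arbitrary: E r b rule: less_induct)
  case less
  have s: "simple_graph V E" using less.prems by (simp add: cactuslike_def)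
  have fin: "finite E" using simple_finite_E[OF s] .
  have IH: "\<And>e r b. e \<in> E \<Longrightarrow> \<exists>c. good V (E - {e}) c \<and> c r = b"
  proof -
    fix e r b assume e: "e \<in> E"
    have "card (E - {e}) < card E" using fin e by (rule card_Diff1_less)
    thus "\<exists>c. good V (E - {e}) c \<and> c r = b"
      using less.hyps cactuslike_del[OF less.prems] by blast
  qed
  have noniso: "\<And>r b. \<exists>e\<in>E. r \<in> e \<Longrightarrow> \<exists>c. good V E c \<and> c r = b"
  proof -
    fix r b assume "\<exists>e\<in>E. r \<in> e"
    then obtain e0 where e0: "e0 \<in> E" "r \<in> e0" by blast
    obtain u w where uw: "e0 = {u, w}" "u \<noteq> w" using simple_edge[OF s e0(1)] by blast
    define v where "v = (if r = u then w else u)"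
    have e0r: "e0 = {r, v}" and rv: "r \<noteq> v" using uw e0(2) by (auto simp: v_def)
    show "\<exists>c. good V E c \<and> c r = b"
    proof (cases "\<exists>C\<in>cycles V E. e0 \<in> C")
      case True
      then obtain xs where xs: "is_cycle V E xs" "e0 \<in> cycle_edges xs" by (auto simp: cycles_def)
      show ?thesis using cycle_case[OF less.prems e0r e0(1) rv xs] IH by blast
    next
      case False
      obtain c1 where c1: "good V (E - {e0}) c1" "c1 r = b" using IH[OF e0(1)] by blast
      obtain c2 where c2: "good V (E - {e0}) c2" "c2 v = (\<not> b)" using IH[OF e0(1)] by blast
      show ?thesis using bridge_case[OF less.prems e0r e0(1) rv False c1 c2] .
    qed
  qed
  show ?case
  proof (cases "\<exists>e\<in>E. r \<in> e")
    case True thus ?thesis using noniso by blast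
  next
    case False
    show ?thesis
    proof (cases "E = {}")
      case True
      have "good V E (\<lambda>_. b)" unfolding good_def using True odd_cycles_empty[of V] by simp
      thus ?thesis by blast
    next
      case ne: False
      then obtain e where e: "e \<in> E" by blast
      obtain u w where "e = {u, w}" using simple_edge[OF s e] by blast
      hence "\<exists>e\<in>E. u \<in> e" using e by blast
      then obtain c where c: "good V E c" using noniso by blast
      have "good V E (c(r := b))" using good_cong[OF c] False by auto
      thus ?thesis by auto
    qed
  qed
qed



lemma sumset_comm: "sumset A B = sumset B A"
  unfolding sumset_def using add.commute by blast

lemma esi: "edge_set_index f {u, v} = sumset (f u) (f v)"
  unfolding edge_set_index_def
proof (rule the_equality)
  show "\<exists>u' v'. {u, v} = {u', v'} \<and> sumset (f u) (f v) = sumset (f u') (f v')" by blast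
next
  fix S assume "\<exists>u' v'. {u, v} = {u', v'} \<and> S = sumset (f u') (f v')"
  then obtain u' v' where "{u, v} = {u', v'}" "S = sumset (f u') (f v')" by blast
  thus "S = sumset (f u) (f v)" by (auto simp: doubleton_eq_iff sumset_comm)
qed

lemma sumset_single: "sumset {a} {b} = {a + b}"
  by (auto simp: sumset_def)

lemma sumset_pair: "sumset {0, d} {a} = {a, d + a}"
  by (auto simp: sumset_def)

lemma finite_sumset: "finite A \<Longrightarrow> finite B \<Longrightarrow> finite (sumset A B)"
proof -
  assume "finite A" "finite B"
  moreover have "sumset A B = (\<lambda>(a, b). a + b) ` (A \<times> B)" by (auto simp: sumset_def)
  ultimately show ?thesis by simp
qed

lemma sumset_big:
  assumes A: "finite A" "A \<noteq> {}" and B: "finite B" "card B \<ge> 2"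
  shows "card A + 1 \<le> card (sumset A B)"
proof -
  obtain x y where xy: "x \<in> B" "y \<in> B" "x \<noteq> y"
  proof -
    have "B \<noteq> {}" using B by auto
    then obtain x where x: "x \<in> B" by blast
    have "card (B - {x}) \<ge> 1" using B x by simp
    hence "B - {x} \<noteq> {}" by (cases "B - {x} = {}") auto
    then obtain y where "y \<in> B - {x}" by blast
    thus ?thesis using that x by blast
  qed
  define m where "m = Min B"
  define M where "M = Max B"
  have Bne: "B \<noteq> {}" using xy by blast
  have mB: "m \<in> B" and MB: "M \<in> B" using B(1) Bne by (auto simp: m_def M_def)
  have mM: "m < M"
  proof -
    have "m \<le> x" "m \<le> y" using B xy by (auto simp: m_def)
    moreover have "x \<le> M" "y \<le> M" using B xy by (auto simp: M_def)
    ultimately show ?thesis using xy(3) by linarith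
  qed
  define a0 where "a0 = Max A"
  have a0A: "a0 \<in> A" using A by (simp add: a0_def)
  have sub: "insert (a0 + M) ((\<lambda>a. a + m) ` A) \<subseteq> sumset A B"
    using mB MB a0A by (auto simp: sumset_def)
  have notin: "a0 + M \<notin> (\<lambda>a. a + m) ` A"
  proof
    assume "a0 + M \<in> (\<lambda>a. a + m) ` A"
    then obtain a where "a \<in> A" "a0 + M = a + m" by blast
    moreover have "a \<le> a0" using A calculation(1) by (simp add: a0_def)
    ultimately show False using mM by linarith
  qed
  have "card (insert (a0 + M) ((\<lambda>a. a + m) ` A)) = card A + 1"
    using notin A by (simp add: card_image inj_on_def)
  moreover have "card (insert (a0 + M) ((\<lambda>a. a + m) ` A)) \<le> card (sumset A B)"
    using sub finite_sumset[OF A(1) B(1)] by (rule card_mono[rotated])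
  ultimately show ?thesis by simp
qed

lemma lower:
  assumes cl: "cactuslike V E" and w: "weak_iasi V E f"
  shows "card (odd_cycles V E) \<le> mono_indexed_count E f"
proof -
  have s: "simple_graph V E" using cl by (simp add: cactuslike_def)
  define M where "M = {e \<in> E. card (edge_set_index f e) = 1}"
  have fv: "\<And>x. x \<in> V \<Longrightarrow> finite (f x) \<and> f x \<noteq> {}" using w by (simp add: weak_iasi_def iasi_def)
  have wk: "\<And>u v. {u, v} \<in> E \<Longrightarrow> card (sumset (f u) (f v)) = max (card (f u)) (card (f v))"
    using w by (simp add: weak_iasi_def)
  have ep: "\<And>u v. {u, v} \<in> E \<Longrightarrow> card (f u) = 1 \<or> card (f v) = 1"
  proof -
    fix u v assume e: "{u, v} \<in> E"
    have e2: "{v, u} \<in> E" using e by (simp add: insert_commute)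
    have uV: "u \<in> V" and vV: "v \<in> V" using simple_V[OF s e] simple_V[OF s e2] by auto
    have fu: "finite (f u)" "f u \<noteq> {}" and fvv: "finite (f v)" "f v \<noteq> {}" using fv uV vV by auto
    have cu: "card (f u) \<ge> 1" and cv: "card (f v) \<ge> 1" using fu fvv
      by (auto simp: Suc_le_eq card_gt_0_iff)
    show "card (f u) = 1 \<or> card (f v) = 1"
    proof (rule ccontr)
      assume "\<not> (card (f u) = 1 \<or> card (f v) = 1)"
      hence "card (f u) \<ge> 2" "card (f v) \<ge> 2" using cu cv by auto
      hence "card (f u) + 1 \<le> card (sumset (f u) (f v))" "card (f v) + 1 \<le> card (sumset (f v) (f u))"
        using sumset_big[OF fu fvv(1)] sumset_big[OF fvv fu(1)] by auto
      thus False using wk[OF e] sumset_comm[of "f u" "f v"] by simp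
    qed
  qed
  have both: "\<And>u v. {u, v} \<in> E \<Longrightarrow> card (f u) = 1 \<Longrightarrow> card (f v) = 1 \<Longrightarrow> {u, v} \<in> M"
    using wk by (simp add: M_def esi)
  have ex: "\<And>C. C \<in> odd_cycles V E \<Longrightarrow> \<exists>e. e \<in> C \<and> e \<in> M"
  proof -
    fix C assume C: "C \<in> odd_cycles V E"
    then obtain xs where xs: "is_cycle V E xs" "C = cycle_edges xs" by (auto simp: odd_cycles_def cycles_def)
    define n where "n = length xs"
    have on: "odd n" using C xs card_cycle_edges[OF xs(1)] by (simp add: odd_cycles_def n_def)
    have n3: "n \<ge> 3" using xs by (simp add: is_cycle_def n_def)
    define g where "g = (\<lambda>i. card (f (xs ! i)) = 1)"
    have "\<exists>i<n. g i = g (Suc i mod n)"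
    proof (rule ccontr)
      assume "\<not> (\<exists>i<n. g i = g (Suc i mod n))"
      hence a: "\<forall>i<n. g i \<noteq> g (Suc i mod n)" by blast
      have n0: "0 < n" using n3 by linarith
      have a1: "\<forall>i<n. i \<noteq> 0 \<longrightarrow> g i \<noteq> g (Suc i mod n)" using a by blast
      have a2: "g 0 \<noteq> g (Suc 0 mod n)" using a n0 by blast
      have "even n" using cyc_one[OF n0 n0 a1] a2 by blast
      thus False using on by simp
    qed
    then obtain i where i: "i < n" "g i = g (Suc i mod n)" by blast
    have eE: "{xs ! i, xs ! (Suc i mod n)} \<in> E" using ed_in_E[OF xs(1), of i] i by (simp add: ed_def n_def)
    have "g i \<or> g (Suc i mod n)" using ep[OF eE] by (simp add: g_def)
    hence "g i \<and> g (Suc i mod n)" using i(2) by blast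
    hence "{xs ! i, xs ! (Suc i mod n)} \<in> M" using both eE by (simp add: g_def)
    moreover have "ed xs i \<in> C" using xs(2) i(1) by (simp add: cycle_edges_ed n_def)
    moreover have "ed xs i = {xs ! i, xs ! (Suc i mod n)}" by (simp add: ed_def n_def)
    ultimately show "\<exists>e. e \<in> C \<and> e \<in> M" by metis
  qed
  define h where "h = (\<lambda>C. SOME e. e \<in> C \<and> e \<in> M)"
  have h: "\<And>C. C \<in> odd_cycles V E \<Longrightarrow> h C \<in> C \<and> h C \<in> M"
    unfolding h_def by (rule someI_ex[OF ex])
  have inj: "inj_on h (odd_cycles V E)"
  proof (rule inj_onI)
    fix C1 C2 assume C: "C1 \<in> odd_cycles V E" "C2 \<in> odd_cycles V E" "h C1 = h C2"
    have "C1 \<in> cycles V E" "C2 \<in> cycles V E" using C by (auto simp: odd_cycles_def)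
    moreover have "h C1 \<in> C1" "h C1 \<in> C2" using h[OF C(1)] h[OF C(2)] C(3) by auto
    ultimately show "C1 = C2" using shared_edge[OF cl] by blast
  qed
  have finM: "finite M" using simple_finite_E[OF s] by (simp add: M_def)
  have "h ` odd_cycles V E \<subseteq> M" using h by blast
  hence "card (odd_cycles V E) \<le> card M" using card_inj_on_le[OF inj _ finM] by blast
  thus ?thesis by (simp add: mono_indexed_count_def M_def)
qed



lemma pow2_unique:
  fixes s :: nat
  assumes "2 ^ b \<le> s" "s < 2 ^ Suc b" "2 ^ b' \<le> s" "s < 2 ^ Suc b'"
  shows "b = b'"
proof (rule ccontr)
  assume "b \<noteq> b'"
  hence "Suc b \<le> b' \<or> Suc b' \<le> b" by linarith
  thus False
  proof
    assume "Suc b \<le> b'"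
    hence "(2::nat) ^ Suc b \<le> 2 ^ b'" by (rule power_increasing) simp
    thus False using assms by linarith
  next
    assume "Suc b' \<le> b"
    hence "(2::nat) ^ Suc b' \<le> 2 ^ b" by (rule power_increasing) simp
    thus False using assms by linarith
  qed
qed

lemma pow2_bounds:
  assumes "a < b" shows "(2::nat) ^ b \<le> 2 ^ a + 2 ^ b" "(2::nat) ^ a + 2 ^ b < 2 ^ Suc b"
proof -
  have "(2::nat) ^ a < 2 ^ b" using assms by (rule power_strict_increasing) simp
  thus "(2::nat) ^ b \<le> 2 ^ a + 2 ^ b" "(2::nat) ^ a + 2 ^ b < 2 ^ Suc b" by auto
qed

lemma pow2_pair_lt:
  assumes "a < b" "a' < b'" "(2::nat) ^ a + 2 ^ b = 2 ^ a' + 2 ^ b'"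
  shows "a = a' \<and> b = b'"
proof -
  have "b = b'" using pow2_bounds[OF assms(1)] pow2_bounds[OF assms(2)] assms(3)
    by (intro pow2_unique[of b "2 ^ a + 2 ^ b" b']) auto
  hence "(2::nat) ^ a = 2 ^ a'" using assms(3) by simp
  hence "a = a'" by simp
  thus ?thesis using \<open>b = b'\<close> by simp
qed

lemma pow2_pair:
  assumes "a \<noteq> b" "a' \<noteq> b'" "(2::nat) ^ a + 2 ^ b = 2 ^ a' + 2 ^ b'"
  shows "{a, b} = {a', b'}"
proof -
  have o: "a < b \<or> b < a" "a' < b' \<or> b' < a'" using assms by auto
  have c: "(2::nat) ^ b + 2 ^ a = 2 ^ a' + 2 ^ b'" "(2::nat) ^ a + 2 ^ b = 2 ^ b' + 2 ^ a'"
    "(2::nat) ^ b + 2 ^ a = 2 ^ b' + 2 ^ a'" using assms(3) by simp_all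
  show ?thesis
    using o pow2_pair_lt[OF _ _ assms(3)] pow2_pair_lt[OF _ _ c(1)] pow2_pair_lt[OF _ _ c(2)]
      pow2_pair_lt[OF _ _ c(3)]
    by (auto simp: insert_commute)
qed

lemma upper:
  assumes cl: "cactuslike V E"
  shows "\<exists>f. weak_iasi V E f \<and> mono_indexed_count E f \<le> card (odd_cycles V E)"
proof -
  have s: "simple_graph V E" using cl by (simp add: cactuslike_def)
  obtain c where gc: "good V E c" using main_col[OF cl] by blast
  have finV: "finite V" using s by (simp add: simple_graph_def)
  obtain g :: "'a \<Rightarrow> nat" where gi: "inj_on g V" using finite_imp_inj_to_nat_seg[OF finV] by blast
  define f where "f = (\<lambda>x. if c x then {0, Suc (g x)} else {(2::nat) ^ g x})"
  have noTT: "\<And>x y. {x, y} \<in> E \<Longrightarrow> \<not> (c x \<and> c y)"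
    using good_D1[OF gc] by blast
  have esiFF: "\<And>x y. \<not> c x \<Longrightarrow> \<not> c y \<Longrightarrow> edge_set_index f {x, y} = {2 ^ g x + 2 ^ g y}"
    by (simp add: esi f_def sumset_single)
  have esiTF: "\<And>x y. c x \<Longrightarrow> \<not> c y \<Longrightarrow> edge_set_index f {x, y} = {2 ^ g y, Suc (g x) + 2 ^ g y}"
    by (simp add: esi f_def sumset_pair)
  have classify: "\<And>e. e \<in> E \<Longrightarrow>
      (\<exists>x y. e = {x, y} \<and> x \<in> V \<and> y \<in> V \<and> x \<noteq> y \<and> \<not> c x \<and> \<not> c y) \<or>
      (\<exists>x y. e = {x, y} \<and> x \<in> V \<and> y \<in> V \<and> c x \<and> \<not> c y)"
  proof -
    fix e assume e: "e \<in> E"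
    then obtain u v where uv: "e = {u, v}" "u \<noteq> v" "u \<in> V" "v \<in> V" using simple_edge[OF s] by blast
    have "\<not> (c u \<and> c v)" using noTT e uv by blast
    moreover have "e = {v, u}" using uv by (simp add: insert_commute)
    ultimately show "(\<exists>x y. e = {x, y} \<and> x \<in> V \<and> y \<in> V \<and> x \<noteq> y \<and> \<not> c x \<and> \<not> c y) \<or>
      (\<exists>x y. e = {x, y} \<and> x \<in> V \<and> y \<in> V \<and> c x \<and> \<not> c y)"
      using uv by (cases "c u"; cases "c v") blast+
  qed
  have card2: "\<And>p k. card {p::nat, Suc k + p} = 2" by simp
  have weak: "\<forall>u v. {u, v} \<in> E \<longrightarrow> card (sumset (f u) (f v)) = max (card (f u)) (card (f v))"
  proof (intro allI impI)
    fix u v assume e: "{u, v} \<in> E"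
    have nt: "\<not> (c u \<and> c v)" using noTT e by blast
    show "card (sumset (f u) (f v)) = max (card (f u)) (card (f v))"
    proof (cases "c u")
      case True
      hence "\<not> c v" using nt by blast
      thus ?thesis using True by (simp add: f_def sumset_pair)
    next
      case False
      show ?thesis
      proof (cases "c v")
        case True
        thus ?thesis using False by (simp add: f_def sumset_pair sumset_comm[of "{2 ^ g u}"])
      next
        case False
        thus ?thesis using \<open>\<not> c u\<close> by (simp add: f_def sumset_single)
      qed
    qed
  qed
  have injf: "inj_on f V"
  proof (rule inj_onI)
    fix x y assume x: "x \<in> V" and y: "y \<in> V" and eq: "f x = f y"
    have "g x = g y"
    proof (cases "c x"; cases "c y")
      assume "c x" "c y"
      thus ?thesis using eq by (simp add: f_def doubleton_eq_iff)
    next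
      assume "c x" "\<not> c y"
      hence "0 \<in> f y" using eq by (simp add: f_def)
      thus ?thesis using \<open>\<not> c y\<close> by (simp add: f_def)
    next
      assume "\<not> c x" "c y"
      hence "0 \<in> f x" using eq by (simp add: f_def)
      thus ?thesis using \<open>\<not> c x\<close> by (simp add: f_def)
    next
      assume "\<not> c x" "\<not> c y"
      thus ?thesis using eq by (simp add: f_def)
    qed
    thus "x = y" using inj_onD[OF gi _ x y] by blast
  qed
  have injE: "inj_on (edge_set_index f) E"
  proof (rule inj_onI)
    fix e1 e2 assume e1: "e1 \<in> E" and e2: "e2 \<in> E" and eq: "edge_set_index f e1 = edge_set_index f e2"
    from classify[OF e1] show "e1 = e2"
    proof (elim disjE exE conjE)
      fix x y assume a: "e1 = {x, y}" "x \<in> V" "y \<in> V" "x \<noteq> y" "\<not> c x" "\<not> c y"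
      have gxy: "g x \<noteq> g y" using gi a by (metis inj_on_def)
      from classify[OF e2] show "e1 = e2"
      proof (elim disjE exE conjE)
        fix x' y' assume b: "e2 = {x', y'}" "x' \<in> V" "y' \<in> V" "x' \<noteq> y'" "\<not> c x'" "\<not> c y'"
        have gxy': "g x' \<noteq> g y'" using gi b by (metis inj_on_def)
        have "(2::nat) ^ g x + 2 ^ g y = 2 ^ g x' + 2 ^ g y'"
          using eq a b esiFF by simp
        hence "{g x, g y} = {g x', g y'}" using pow2_pair gxy gxy' by blast
        hence "(g x = g x' \<and> g y = g y') \<or> (g x = g y' \<and> g y = g x')" by (simp add: doubleton_eq_iff)
        hence "(x = x' \<and> y = y') \<or> (x = y' \<and> y = x')" using gi a b by (auto simp: inj_on_def)
        thus "e1 = e2" using a b by (auto simp: insert_commute)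
      next
        fix x' y' assume b: "e2 = {x', y'}" "x' \<in> V" "y' \<in> V" "c x'" "\<not> c y'"
        have False using eq a b esiFF esiTF by (simp; linarith)
        thus "e1 = e2" by simp
      qed
    next
      fix x y assume a: "e1 = {x, y}" "x \<in> V" "y \<in> V" "c x" "\<not> c y"
      from classify[OF e2] show "e1 = e2"
      proof (elim disjE exE conjE)
        fix x' y' assume b: "e2 = {x', y'}" "x' \<in> V" "y' \<in> V" "x' \<noteq> y'" "\<not> c x'" "\<not> c y'"
        have False using eq a b esiFF esiTF by (simp; linarith)
        thus "e1 = e2" by simp
      next
        fix x' y' assume b: "e2 = {x', y'}" "x' \<in> V" "y' \<in> V" "c x'" "\<not> c y'"
        have "{(2::nat) ^ g y, Suc (g x) + 2 ^ g y} = {2 ^ g y', Suc (g x') + 2 ^ g y'}"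
          using eq a b esiTF by simp
        hence "(2::nat) ^ g y = 2 ^ g y' \<and> g x = g x'" by (auto simp: doubleton_eq_iff)
        hence "g y = g y'" "g x = g x'" by simp_all
        hence "y = y'" "x = x'" using gi a b by (auto simp: inj_on_def)
        thus "e1 = e2" using a b by simp
      qed
    qed
  qed
  have wi: "weak_iasi V E f"
    unfolding weak_iasi_def iasi_def using weak injf injE by (simp add: f_def)
  define M where "M = {e \<in> E. card (edge_set_index f e) = 1}"
  have MF: "\<And>e. e \<in> M \<Longrightarrow> allF c e"
  proof -
    fix e assume e: "e \<in> M"
    hence eE: "e \<in> E" and ce: "card (edge_set_index f e) = 1" by (auto simp: M_def)
    from classify[OF eE] show "allF c e"
    proof (elim disjE exE conjE)
      fix x y assume "e = {x, y}" "x \<in> V" "y \<in> V" "x \<noteq> y" "\<not> c x" "\<not> c y"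
      thus "allF c e" by (simp add: allF_def)
    next
      fix x y assume a: "e = {x, y}" "x \<in> V" "y \<in> V" "c x" "\<not> c y"
      hence "card (edge_set_index f e) = 2" using esiTF by simp
      thus "allF c e" using ce by simp
    qed
  qed
  define k where "k = (\<lambda>e. SOME C. C \<in> odd_cycles V E \<and> e \<in> C)"
  have k: "\<And>e. e \<in> M \<Longrightarrow> k e \<in> odd_cycles V E \<and> e \<in> k e"
  proof -
    fix e assume e: "e \<in> M"
    hence "\<exists>C. C \<in> odd_cycles V E \<and> e \<in> C" using good_D2[OF gc] MF[OF e] by (auto simp: M_def)
    thus "k e \<in> odd_cycles V E \<and> e \<in> k e" unfolding k_def by (rule someI_ex)
  qed
  have injk: "inj_on k M"
  proof (rule inj_onI)
    fix e1 e2 assume e: "e1 \<in> M" "e2 \<in> M" "k e1 = k e2"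
    have "k e1 \<in> odd_cycles V E" "e1 \<in> k e1" "e2 \<in> k e1" using k[OF e(1)] k[OF e(2)] e(3) by auto
    thus "e1 = e2" using good_D3[OF gc] MF e(1,2) by blast
  qed
  have fo: "finite (odd_cycles V E)" using cycles_finite[OF s] by (simp add: odd_cycles_def)
  have "k ` M \<subseteq> odd_cycles V E" using k by blast
  hence "card M \<le> card (odd_cycles V E)" using card_inj_on_le[OF injk _ fo] by blast
  hence "mono_indexed_count E f \<le> card (odd_cycles V E)" by (simp add: mono_indexed_count_def M_def)
  thus ?thesis using wi by blast
qed

theorem theorem2p24:
  fixes V :: "'a set" and E :: "'a set set"
  assumes "cactus V E"
  shows "sparing_number V E = card (odd_cycles V E)"
proof -
  have cl: "cactuslike V E" using assms by (simp add: cactus_def cactuslike_def)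
  define P where "P = (\<lambda>k. \<exists>f. weak_iasi V E f \<and> k = mono_indexed_count E f)"
  obtain f0 where f0: "weak_iasi V E f0" "mono_indexed_count E f0 \<le> card (odd_cycles V E)"
    using upper[OF cl] by blast
  have P0: "P (mono_indexed_count E f0)" using f0 by (auto simp: P_def)
  have le: "(LEAST k. P k) \<le> card (odd_cycles V E)" using Least_le[of P, OF P0] f0(2) by linarith
  have "P (LEAST k. P k)" using P0 by (rule LeastI)
  then obtain f1 where f1: "weak_iasi V E f1" "(LEAST k. P k) = mono_indexed_count E f1" by (auto simp: P_def)
  have ge: "card (odd_cycles V E) \<le> (LEAST k. P k)" using lower[OF cl f1(1)] f1(2) by simp
  have "sparing_number V E = (LEAST k. P k)" by (simp add: sparing_number_def P_def)
  thus ?thesis using le ge by simp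
qed


end
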